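(* Let $E$ be a finite-dimensional real vector space and $\omega_0,\omega_1$ two symplectic forms on $E$. Then the space of complex structures $J$ on $E$ that are tamed by both $\omega_0$ and $\omega_1$ is either empty or contractible.
   Context: A complex structure $J$ ($J^2=-\mathrm{id}$) on $E$ is tamed by a symplectic form $\omega$ if $\omega(v,Jv)>0$ for every nonzero $v\in E$. *)

theory Defs
  imports "HOL-Analysis.Analysis"
begin

definition symplectic_form :: "(real^'n \<Rightarrow> real^'n \<Rightarrow> real) \<Rightarrow> bool" where
  "symplectic_form \<omega> \<longleftrightarrow> bilinear \<omega> \<and> (\<forall>x y. \<omega> x y = - \<omega> y x)
     \<and> (\<forall>x. (\<forall>y. \<omega> x y = 0) \<longrightarrow> x = 0)"

definition complex_structure :: "real^'n^'n \<Rightarrow> bool" where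
  "complex_structure J \<longleftrightarrow> J ** J = - mat 1"

definition tamed_by :: "real^'n^'n \<Rightarrow> (real^'n \<Rightarrow> real^'n \<Rightarrow> real) \<Rightarrow> bool" where
  "tamed_by J \<omega> \<longleftrightarrow> (\<forall>v. v \<noteq> 0 \<longrightarrow> \<omega> v (J *v v) > 0)"

end

theory Submission
  imports Defs
begin

definition minv :: "real^'n^'n \<Rightarrow> real^'n^'n" where
  "minv A = (\<chi> k j. det(\<chi> i l. if l = k then axis j 1 $ i else A$i$l) / det A)"

lemma minv_right: assumes "det A \<noteq> 0" shows "A ** minv A = mat 1"
proof -
  have c: "A *v (\<chi> k. minv A $ k $ j) = axis j 1" for j
    using cramer[OF assms, of "\<chi> k. minv A $ k $ j" "axis j 1"] by (simp add: minv_def)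
  show ?thesis
  proof (rule vec_eq_iff[THEN iffD2], intro allI, rule vec_eq_iff[THEN iffD2], intro allI)
    fix i j
    have "(A ** minv A) $ i $ j = (A *v (\<chi> k. minv A $ k $ j)) $ i"
      by (simp add: matrix_matrix_mult_def matrix_vector_mult_def)
    also have "\<dots> = mat 1 $ i $ j" by (simp add: c axis_def mat_def)
    finally show "(A ** minv A) $ i $ j = mat 1 $ i $ j" .
  qed
qed

lemma minv_left: assumes "det A \<noteq> 0" shows "minv A ** A = mat 1"
  using minv_right[OF assms] matrix_left_right_inverse by blast

lemma det_nz_ker: fixes A :: "real^'n^'n"
  assumes "\<And>x. A *v x = 0 \<Longrightarrow> x = 0" shows "det A \<noteq> 0"
  using assms invertible_det_nz invertible_left_inverse matrix_left_invertible_ker by metis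

lemma continuous_on_det[continuous_intros]:
  fixes f :: "'a::topological_space \<Rightarrow> real^'n^'n"
  assumes "continuous_on S f" shows "continuous_on S (\<lambda>x. det (f x))"
  unfolding det_def by (intro continuous_intros assms)

lemma continuous_on_mmult[continuous_intros]:
  fixes f g :: "'a::topological_space \<Rightarrow> real^'n^'n"
  assumes "continuous_on S f" "continuous_on S g" shows "continuous_on S (\<lambda>x. f x ** g x)"
  unfolding matrix_matrix_mult_def by (intro continuous_intros assms)

lemma continuous_on_minv[continuous_intros]:
  fixes f :: "'a::topological_space \<Rightarrow> real^'n^'n"
  assumes "continuous_on S f" "\<And>x. x \<in> S \<Longrightarrow> det (f x) \<noteq> 0"
  shows "continuous_on S (\<lambda>x. minv (f x))"
  unfolding minv_def
  apply (intro continuous_intros assms)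
  subgoal for k j i l by (cases "l = k") (auto intro!: continuous_intros assms)
  using assms by auto

lemma mm_sub_l: "(A::real^'n^'n) ** (B - C) = A ** B - A ** C"
  by (simp add: matrix_matrix_mult_def vec_eq_iff sum_subtractf algebra_simps)
lemma mm_sub_r: "((A::real^'n^'n) - B) ** C = A ** C - B ** C"
  by (simp add: matrix_matrix_mult_def vec_eq_iff sum_subtractf algebra_simps)
lemma mm_add_r: "((A::real^'n^'n) + B) ** C = A ** C + B ** C"
  by (simp add: matrix_matrix_mult_def vec_eq_iff sum.distrib algebra_simps)
lemma mm_neg_l: "(- (A::real^'n^'n)) ** B = - (A ** B)"
  by (simp add: matrix_matrix_mult_def vec_eq_iff sum_negf)
lemma mm_neg_r: "(A::real^'n^'n) ** (- B) = - (A ** B)"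
  by (simp add: matrix_matrix_mult_def vec_eq_iff sum_negf)
lemma mm_scale_l: "(c *\<^sub>R (A::real^'n^'n)) ** B = c *\<^sub>R (A ** B)"
  by (simp add: matrix_matrix_mult_def vec_eq_iff sum_distrib_left algebra_simps)
lemma mm_scale_r: "(A::real^'n^'n) ** (c *\<^sub>R B) = c *\<^sub>R (A ** B)"
  by (simp add: matrix_matrix_mult_def vec_eq_iff sum_distrib_left algebra_simps)
lemma mv_scale: "(c *\<^sub>R (A::real^'n^'n)) *v x = c *\<^sub>R (A *v x)"
  by (simp add: matrix_vector_mult_def vec_eq_iff sum_distrib_left algebra_simps)
lemma mv_neg: "(- (A::real^'n^'n)) *v x = - (A *v x)"
  by (simp add: matrix_vector_mult_def vec_eq_iff sum_negf)

lemma cancel_l: assumes "det (M::real^'n^'n) \<noteq> 0" "M ** X = M ** Y" shows "X = Y"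
proof -
  have "minv M ** (M ** X) = minv M ** (M ** Y)" using assms(2) by simp
  thus ?thesis by (simp add: matrix_mul_assoc minv_left[OF assms(1)])
qed

lemma anticomm:
  fixes A B :: "real^'n^'n"
  assumes AA: "A ** A = - mat 1" and BB: "B ** B = - mat 1" and d: "det (A + B) \<noteq> 0"
  shows "B ** (minv (A + B) ** (A - B)) = - ((minv (A + B) ** (A - B)) ** B)"
proof -
  let ?M = "A + B" and ?K = "minv (A + B)"
  have MK: "?M ** ?K = mat 1" and KM: "?K ** ?M = mat 1" using minv_right[OF d] minv_left[OF d] by auto
  have e1: "?M ** B = A ** ?M"
    by (simp add: mm_add_r matrix_add_ldistrib AA BB add.commute)
  have BK: "B ** ?K = ?K ** A"
  proof -
    have "?K ** A = ?K ** A ** (?M ** ?K)" by (simp add: MK)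
    also have "\<dots> = ?K ** (A ** ?M) ** ?K" by (simp add: matrix_mul_assoc)
    also have "\<dots> = ?K ** (?M ** B) ** ?K" by (simp add: e1)
    also have "\<dots> = (?K ** ?M) ** B ** ?K" by (simp add: matrix_mul_assoc)
    also have "\<dots> = B ** ?K" by (simp add: KM)
    finally show ?thesis by simp
  qed
  have "B ** (?K ** (A - B)) = ?K ** (A ** (A - B))" by (simp add: matrix_mul_assoc BK)
  also have "\<dots> = ?K ** (- mat 1 - A ** B)" by (simp add: mm_sub_l AA)
  also have "\<dots> = - (?K ** ((A - B) ** B))"
  proof -
    have h: "(A - B) ** B = A ** B + mat 1" by (simp add: mm_sub_r BB)
    have "- mat 1 - A ** B = - ((A - B) ** B)" by (simp add: h)
    thus ?thesis by (simp add: mm_neg_r)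
  qed
  also have "\<dots> = - ((?K ** (A - B)) ** B)" by (simp add: matrix_mul_assoc)
  finally show ?thesis .
qed

lemma endpoint:
  fixes A B :: "real^'n^'n"
  assumes AA: "A ** A = - mat 1" and BB: "B ** B = - mat 1" and d: "det (A + B) \<noteq> 0"
  shows "(mat 1 - minv (A + B) ** (A - B)) ** B = A ** (mat 1 - minv (A + B) ** (A - B))"
proof -
  let ?M = "A + B" and ?K = "minv (A + B)" and ?P = "mat 1 - minv (A + B) ** (A - B)"
  have MK: "?M ** ?K = mat 1" using minv_right[OF d] by auto
  have MP: "?M ** ?P = (A + B) - (A - B)"
    by (simp add: mm_sub_l matrix_mul_assoc MK)
  have e2: "?M ** A = B ** ?M"
    by (simp add: mm_add_r matrix_add_ldistrib AA BB add.commute)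
  show ?thesis
  proof (rule cancel_l[OF d])
    have "?M ** (?P ** B) = ((A + B) - (A - B)) ** B" by (simp add: matrix_mul_assoc MP)
    also have "\<dots> = B ** ((A + B) - (A - B))"
      by (simp only: mm_sub_r mm_add_r mm_sub_l matrix_add_ldistrib) (simp add: algebra_simps)
    also have "\<dots> = B ** (?M ** ?P)" by (simp add: MP)
    also have "\<dots> = ?M ** (A ** ?P)" by (simp add: matrix_mul_assoc e2)
    finally show "?M ** (?P ** B) = ?M ** (A ** ?P)" .
  qed
qed

lemma det_sum_nz:
  fixes A B :: "real^'n^'n"
  assumes bil: "bilinear \<omega>" and tA: "tamed_by A \<omega>" and tB: "tamed_by B \<omega>"
  shows "det (A + B) \<noteq> 0"
proof (rule det_nz_ker, rule ccontr)
  fix x assume h: "(A + B) *v x = 0" and x: "x \<noteq> 0"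
  have "\<omega> x ((A + B) *v x) = 0" using h bilinear_rzero[OF bil] by simp
  moreover have "\<omega> x ((A + B) *v x) = \<omega> x (A *v x) + \<omega> x (B *v x)"
    by (simp add: matrix_vector_mult_add_rdistrib bilinear_radd[OF bil])
  moreover have "\<omega> x (A *v x) > 0" "\<omega> x (B *v x) > 0" using tA tB x by (auto simp: tamed_by_def)
  ultimately show False by linarith
qed

lemma det_P_nz:
  fixes A B :: "real^'n^'n"
  assumes bil: "bilinear \<omega>" and tA: "tamed_by A \<omega>" and tB: "tamed_by B \<omega>"
    and d: "det (A + B) \<noteq> 0" and t: "0 \<le> t" "t \<le> 1"
  shows "det (mat 1 - t *\<^sub>R (minv (A + B) ** (A - B))) \<noteq> 0"
proof (rule det_nz_ker, rule ccontr)
  let ?P = "mat 1 - t *\<^sub>R (minv (A + B) ** (A - B))"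
  fix x assume h: "?P *v x = 0" and x: "x \<noteq> 0"
  have MK: "(A + B) ** minv (A + B) = mat 1" using minv_right[OF d] by auto
  have MP: "(A + B) ** ?P = (A + B) - t *\<^sub>R (A - B)"
    by (simp add: mm_sub_l mm_scale_r matrix_mul_assoc MK)
  have "((A + B) ** ?P) *v x = 0" using h by (simp add: matrix_vector_mul_assoc[symmetric])
  hence "A *v x + B *v x - t *\<^sub>R (A *v x - B *v x) = 0"
    by (simp add: MP matrix_vector_mult_diff_rdistrib matrix_vector_mult_add_rdistrib mv_scale)
  hence "\<omega> x (A *v x + B *v x - t *\<^sub>R (A *v x - B *v x)) = 0" using bilinear_rzero[OF bil] by simp
  hence e: "\<omega> x (A *v x) + \<omega> x (B *v x) - t * (\<omega> x (A *v x) - \<omega> x (B *v x)) = 0"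
    by (simp add: bilinear_radd[OF bil] bilinear_rsub[OF bil] bilinear_rmul[OF bil])
  have a: "\<omega> x (A *v x) > 0" and b: "\<omega> x (B *v x) > 0" using tA tB x by (auto simp: tamed_by_def)
  have "(1 - t) * \<omega> x (A *v x) \<ge> 0" using a t by simp
  moreover have "(1 + t) * \<omega> x (B *v x) > 0" using b t by simp
  ultimately show False using e by (simp add: algebra_simps)
qed

lemma tame_path:
  fixes A B Z :: "real^'n^'n"
  assumes bil: "bilinear \<omega>" and tA: "tamed_by A \<omega>" and tB: "tamed_by B \<omega>"
    and BZ: "B ** Z = - (Z ** B)" and d1: "det (mat 1 - Z) \<noteq> 0"
    and e: "(mat 1 - Z) ** B = A ** (mat 1 - Z)"
    and dt: "det (mat 1 - t *\<^sub>R Z) \<noteq> 0" and t: "0 \<le> t" "t \<le> 1"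
  shows "tamed_by ((mat 1 - t *\<^sub>R Z) ** B ** minv (mat 1 - t *\<^sub>R Z)) \<omega>"
  unfolding tamed_by_def
proof (intro allI impI)
  let ?P = "mat 1 - t *\<^sub>R Z"
  fix v :: "real^'n" assume v: "v \<noteq> 0"
  define w where "w = minv ?P *v v"
  define u where "u = Z *v w"
  have vw: "v = ?P *v w"
    unfolding w_def by (simp add: matrix_vector_mul_assoc minv_right[OF dt])
  have w0: "w \<noteq> 0" using v vw by auto
  have Pw: "?P *v w = w - t *\<^sub>R u"
    by (simp add: u_def matrix_vector_mult_diff_rdistrib mv_scale)
  have ZB': "Z ** B = - (B ** Z)" using BZ by simp
  have ZB: "Z *v (B *v w) = - (B *v u)"
    by (simp add: u_def matrix_vector_mul_assoc ZB' mv_neg)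
  have Hv: "((?P ** B ** minv ?P)) *v v = B *v w + t *\<^sub>R (B *v u)"
  proof -
    have "((?P ** B ** minv ?P)) *v v = (?P ** B ** (minv ?P ** ?P)) *v w"
      by (simp add: vw matrix_vector_mul_assoc matrix_mul_assoc)
    also have "\<dots> = ?P *v (B *v w)" by (simp add: minv_left[OF dt] matrix_vector_mul_assoc)
    also have "\<dots> = B *v w + t *\<^sub>R (B *v u)"
      by (simp add: matrix_vector_mult_diff_rdistrib mv_scale ZB)
    finally show ?thesis .
  qed
  define a where "a = \<omega> w (B *v w)"
  define c where "c = \<omega> u (B *v u)"
  define b1 where "b1 = \<omega> w (B *v u)"
  define b2 where "b2 = \<omega> u (B *v w)"
  have ft0: "\<omega> v ((?P ** B ** minv ?P) *v v) = \<omega> (w - t *\<^sub>R u) (B *v w + t *\<^sub>R (B *v u))"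
    using Hv vw Pw by simp
  have ft: "\<omega> v ((?P ** B ** minv ?P) *v v) = a + t * b1 - t * b2 - t * t * c"
    unfolding ft0 a_def b1_def b2_def c_def
    by (simp add: bilinear_radd[OF bil] bilinear_lsub[OF bil] bilinear_rmul[OF bil] bilinear_lmul[OF bil] algebra_simps)
  have apos: "a > 0" using tB w0 by (auto simp: tamed_by_def a_def)
  have cnn: "c \<ge> 0"
  proof (cases "u = 0")
    case True thus ?thesis by (simp add: c_def bilinear_lzero[OF bil])
  next
    case False thus ?thesis using tB by (auto simp: tamed_by_def c_def intro: less_imp_le)
  qed
  have f1: "a + b1 - b2 - c > 0"
  proof -
    have P1w: "(mat 1 - Z) *v w = w - u" by (simp add: u_def matrix_vector_mult_diff_rdistrib)
    have nz: "w - u \<noteq> 0"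
    proof
      assume "w - u = 0"
      hence "(mat 1 - Z) *v w = 0" using P1w by simp
      hence "minv (mat 1 - Z) *v ((mat 1 - Z) *v w) = 0" by simp
      hence "w = 0" by (simp add: matrix_vector_mul_assoc minv_left[OF d1])
      thus False using w0 by simp
    qed
    have "A *v (w - u) = ((mat 1 - Z) ** B) *v w" by (simp add: e P1w[symmetric] matrix_vector_mul_assoc)
    also have "\<dots> = B *v w + B *v u"
      by (simp add: matrix_vector_mul_assoc[symmetric] matrix_vector_mult_diff_rdistrib ZB)
    finally have "A *v (w - u) = B *v w + B *v u" .
    moreover have "\<omega> (w - u) (A *v (w - u)) > 0" using tA nz by (auto simp: tamed_by_def)
    ultimately have "\<omega> (w - u) (B *v w + B *v u) > 0" by simp
    thus ?thesis unfolding a_def b1_def b2_def c_def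
      by (simp add: bilinear_radd[OF bil] bilinear_lsub[OF bil] algebra_simps)
  qed
  have "t * (1 - t) * c \<ge> 0" using t cnn by simp
  moreover have "(1 - t) * a \<ge> 0" using t apos by simp
  moreover have "t * (a + b1 - b2 - c) \<ge> 0" using t f1 by simp
  moreover have "(1 - t) * a + t * (a + b1 - b2 - c) > 0"
  proof (cases "t = 1")
    case True thus ?thesis using f1 by simp
  next
    case False hence "(1 - t) * a > 0" using t apos by simp
    thus ?thesis using \<open>t * (a + b1 - b2 - c) \<ge> 0\<close> by linarith
  qed
  moreover have "a + t * b1 - t * b2 - t * t * c = (1 - t) * a + t * (a + b1 - b2 - c) + t * (1 - t) * c"
    by (simp add: algebra_simps)
  ultimately show "\<omega> v ((?P ** B ** minv ?P) *v v) > 0" unfolding ft by linarith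
qed

theorem proposition1p1:
  fixes \<omega>0 \<omega>1 :: "real^'n \<Rightarrow> real^'n \<Rightarrow> real"
  assumes "symplectic_form \<omega>0" and "symplectic_form \<omega>1"
  shows "{J. complex_structure J \<and> tamed_by J \<omega>0 \<and> tamed_by J \<omega>1} = {}
       \<or> contractible {J. complex_structure J \<and> tamed_by J \<omega>0 \<and> tamed_by J \<omega>1}"
proof (cases "{J. complex_structure J \<and> tamed_by J \<omega>0 \<and> tamed_by J \<omega>1} = {}")
  case True thus ?thesis by simp
next
  case False
  define S where "S = {J. complex_structure J \<and> tamed_by J \<omega>0 \<and> tamed_by J \<omega>1}"
  obtain B where B: "B \<in> S" using False S_def by auto
  have b0: "bilinear \<omega>0" and b1: "bilinear \<omega>1" using assms unfolding symplectic_form_def by blast+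
  have BB: "B ** B = - mat 1" and tB0: "tamed_by B \<omega>0" and tB1: "tamed_by B \<omega>1"
    using B by (auto simp: S_def complex_structure_def)
  define Z where "Z A = minv (A + B) ** (A - B)" for A
  define P where "P y = mat 1 - (1 - fst y) *\<^sub>R Z (snd y)" for y :: "real \<times> (real^'n^'n)"
  define H where "H y = P y ** B ** minv (P y)" for y
  define h where "h y = (if snd y \<in> S then H y else if fst y = 0 then snd y else B)" for y
  have dS: "det (A + B) \<noteq> 0" if "A \<in> S" for A
    using det_sum_nz[OF b0, of A B] that tB0 by (simp add: S_def)
  have dP: "det (P y) \<noteq> 0" if hy: "y \<in> {0..1} \<times> S" for y
  proof -
    obtain s A where y: "y = (s, A)" "0 \<le> s" "s \<le> 1" "A \<in> S" using hy by (cases y) auto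
    have "tamed_by A \<omega>0" using y by (simp add: S_def)
    thus ?thesis using det_P_nz[OF b0 _ tB0 dS[OF y(4)], of "1 - s"] y by (simp add: P_def Z_def)
  qed
  have HS: "H y \<in> S" if hy: "y \<in> {0..1} \<times> S" for y
  proof -
    obtain s A where y: "y = (s, A)" "0 \<le> s" "s \<le> 1" "A \<in> S" using hy by (cases y) auto
    have AA: "A ** A = - mat 1" and tA0: "tamed_by A \<omega>0" and tA1: "tamed_by A \<omega>1"
      using y by (auto simp: S_def complex_structure_def)
    have dA: "det (A + B) \<noteq> 0" using dS y by simp
    have BZ: "B ** Z A = - (Z A ** B)" unfolding Z_def by (rule anticomm[OF AA BB dA])
    have d1: "det (mat 1 - Z A) \<noteq> 0"
      using det_P_nz[OF b0 tA0 tB0 dA, of 1] by (simp add: Z_def)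
    have e: "(mat 1 - Z A) ** B = A ** (mat 1 - Z A)" unfolding Z_def by (rule endpoint[OF AA BB dA])
    have Py: "P y = mat 1 - (1 - s) *\<^sub>R Z A" by (simp add: P_def y)
    have dt: "det (mat 1 - (1 - s) *\<^sub>R Z A) \<noteq> 0" using dP[OF hy] Py by simp
    have t0: "tamed_by (H y) \<omega>0" unfolding H_def Py
      by (rule tame_path[OF b0 tA0 tB0 BZ d1 e dt]) (use y in auto)
    have t1: "tamed_by (H y) \<omega>1" unfolding H_def Py
      by (rule tame_path[OF b1 tA1 tB1 BZ d1 e dt]) (use y in auto)
    have "H y ** H y = P y ** B ** (minv (P y) ** P y) ** B ** minv (P y)"
      by (simp add: H_def matrix_mul_assoc)
    also have "\<dots> = P y ** (B ** B) ** minv (P y)" by (simp add: minv_left[OF dP[OF hy]] matrix_mul_assoc)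
    also have "\<dots> = - mat 1" by (simp add: BB mm_neg_l mm_neg_r minv_right[OF dP[OF hy]])
    finally show ?thesis using t0 t1 by (simp add: S_def complex_structure_def)
  qed
  have cP: "continuous_on ({0..1} \<times> S) P"
    unfolding P_def Z_def
    by (intro continuous_intros) (use dS in auto)
  have cont: "continuous_on ({0..1} \<times> S) H"
    unfolding H_def
    by (intro continuous_intros cP dP)
  have hcont: "continuous_on ({0..1} \<times> S) h"
    using cont by (rule continuous_on_cong[THEN iffD1, rotated 2]) (auto simp: h_def)
  have himg: "h \<in> {0..1} \<times> S \<rightarrow> S" using HS by (auto simp: h_def)
  have h0: "h (0, x) = x" for x
  proof (cases "x \<in> S")
    case True
    have AA: "x ** x = - mat 1" and tA0: "tamed_by x \<omega>0" using True by (auto simp: S_def complex_structure_def)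
    have dA: "det (x + B) \<noteq> 0" using dS True by simp
    have d1: "det (mat 1 - Z x) \<noteq> 0"
      using det_P_nz[OF b0 tA0 tB0 dA, of 1] by (simp add: Z_def)
    have e: "(mat 1 - Z x) ** B = x ** (mat 1 - Z x)" unfolding Z_def by (rule endpoint[OF AA BB dA])
    have "h (0, x) = (mat 1 - Z x) ** B ** minv (mat 1 - Z x)" using True by (simp add: h_def H_def P_def)
    also have "\<dots> = x" by (simp add: e matrix_mul_assoc[symmetric] minv_right[OF d1])
    finally show ?thesis .
  qed (simp add: h_def)
  have h1: "h (1, x) = B" for x
  proof -
    have "det (mat 1 :: real^'n^'n) \<noteq> 0" by simp
    hence "minv (mat 1 :: real^'n^'n) = mat 1" using minv_right by fastforce
    thus ?thesis by (simp add: h_def H_def P_def)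
  qed
  have cm: "continuous_map (prod_topology (top_of_set {0..1}) (top_of_set S)) (top_of_set S) h"
    unfolding subtopology_Times[symmetric] prod_topology_euclidean continuous_map_subtopology_eu
    using hcont himg by auto
  have "homotopic_with_canon (\<lambda>x. True) S S id (\<lambda>x. B)"
    unfolding homotopic_with_def
    apply (rule exI[of _ h])
    using cm h0 h1 by simp
  hence "contractible S" unfolding contractible_def by blast
  thus ?thesis unfolding S_def by blast
qed

end
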